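(* Let $K$ be a convex set (in some real vector space). Let $\mathcal{D}(K)$ be the collection of all finite ensembles over $K$, regarded as a test space with outcome set $X(K)=(0,1]\times K$. Then the only probability weight on $\mathcal{D}(K)$ is the function $\rho:(0,1]\times K\to[0,1]$ given by $\rho((t,\alpha))=t$.
   Context: A finite ensemble over $K$ is a finite set of pairs $\{(t_1,\alpha_1),\dots,(t_n,\alpha_n)\}$ with $\alpha_i\in K$, $t_i\in(0,1]$ and $\sum_{i=1}^n t_i=1$. A probability weight on a collection $\mathcal{M}$ of sets (a test space) with $X=\bigcup\mathcal{M}$ is a function $f:X\to[0,1]$ such that $\sum_{x\in E}f(x)=1$ for every $E\in\mathcal{M}$. *)

theory Defs
  imports "HOL-Analysis.Analysis"
begin

definition finite_ensembles :: "'a set \<Rightarrow> (real \<times> 'a) set set" where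
  "finite_ensembles K =
     {E. finite E \<and> E \<subseteq> {0<..1} \<times> K \<and> (\<Sum>x\<in>E. fst x) = 1}"

definition probability_weight :: "'x set set \<Rightarrow> ('x \<Rightarrow> real) \<Rightarrow> bool" where
  "probability_weight M f \<longleftrightarrow>
     (\<forall>x\<in>\<Union>M. f x \<in> {0..1}) \<and> (\<forall>E\<in>M. (\<Sum>x\<in>E. f x) = 1)"

end

theory Submission
  imports Defs
begin

lemma avoid:
  fixes A :: "real set"
  assumes "finite A" "0 < s" "s \<le> 1"
  shows "\<exists>S. finite S \<and> S \<subseteq> {0<..1} \<and> S \<inter> A = {} \<and> (\<Sum>x\<in>S. x) = s"
proof (cases "s \<in> A")
  case False
  then show ?thesis using assms by (intro exI[of _ "{s}"]) auto
next
  case True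
  let ?B = "A \<union> (\<lambda>x. s - x) ` A"
  have "infinite ({0<..<s/2} - ?B)"
    using assms by (intro Diff_infinite_finite) (auto simp: infinite_Ioo)
  then obtain r where r: "r \<in> {0<..<s/2}" "r \<notin> ?B"
    using infinite_imp_nonempty by blast
  have "s - r \<notin> A"
  proof
    assume "s - r \<in> A"
    then have "s - (s - r) \<in> (\<lambda>x. s - x) ` A" by blast
    then show False using r by auto
  qed
  moreover have "r \<noteq> s - r" using r by auto
  ultimately show ?thesis using r assms
    by (intro exI[of _ "{r, s - r}"]) auto
qed

definition good :: "real set \<Rightarrow> real \<Rightarrow> bool" where
  "good S s \<longleftrightarrow> finite S \<and> S \<subseteq> {0<..1} \<and> (\<Sum>x\<in>S. x) = s"

lemma core:
  fixes h :: "real \<Rightarrow> real"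
  assumes H: "\<And>S. finite S \<Longrightarrow> S \<subseteq> {0<..1} \<Longrightarrow> (\<Sum>x\<in>S. x) = 1 \<Longrightarrow> (\<Sum>x\<in>S. h x) = 1"
    and nn: "\<And>x. 0 < x \<Longrightarrow> x \<le> 1 \<Longrightarrow> h x \<ge> 0"
    and t: "0 < t" "t \<le> 1"
  shows "h t = t"
proof -
  have ex: "\<exists>S. good S s \<and> S \<inter> A = {}" if "finite A" "0 < s" "s \<le> 1" for A s
    using avoid[OF that] unfolding good_def by blast
  have uniq: "sum h S = sum h T" if U: "good S s" "good T s" "0 < s" "s \<le> 1" for S T s
  proof (cases "s = 1")
    case True then show ?thesis using that H unfolding good_def by simp
  next
    case False
    have fin: "finite (S \<union> T)" using that unfolding good_def by auto
    obtain R where R: "good R (1 - s)" "R \<inter> (S \<union> T) = {}"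
      using ex[OF fin, of "1 - s"] False U(3,4) by fastforce
    have d: "S \<inter> R = {}" "T \<inter> R = {}" using R by auto
    have 1: "sum h (S \<union> R) = 1" "sum h (T \<union> R) = 1"
      using R U d by (intro H; auto simp: good_def sum.union_disjoint)+
    then show ?thesis using R U d by (auto simp: good_def sum.union_disjoint)
  qed
  define phi where "phi s = sum h (SOME S. good S s)" for s
  have phi: "phi s = sum h S" if "good S s" "0 < s" "s \<le> 1" for S s
  proof -
    have "good (SOME S. good S s) s" using someI[of "\<lambda>S. good S s", OF that(1)] .
    then show ?thesis unfolding phi_def using uniq that by blast
  qed
  have single: "phi s = h s" if "0 < s" "s \<le> 1" for s
    using phi[of "{s}" s] that by (simp add: good_def)
  have add: "phi (a + b) = phi a + phi b" if AB: "0 < a" "0 < b" "a + b \<le> 1" for a b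
  proof -
    obtain S where S: "good S a" using ex[of "{}" a] AB by force
    obtain T where T: "good T b" "S \<inter> T = {}" using ex[of S b] AB S by (auto simp: good_def)
    have "good (S \<union> T) (a + b)" using S T by (auto simp: good_def sum.union_disjoint)
    then have "phi (a + b) = sum h (S \<union> T)" using phi AB by auto
    also have "\<dots> = sum h S + sum h T" using S T by (auto simp: good_def sum.union_disjoint)
    also have "\<dots> = phi a + phi b" using phi S T AB by auto
    finally show ?thesis .
  qed
  have pnn: "phi s \<ge> 0" if "0 < s" "s \<le> 1" for s using single nn that by auto
  have mono: "phi a \<le> phi b" if "0 < a" "a \<le> b" "b \<le> 1" for a b
  proof (cases "a = b")
    case False
    then have "phi b = phi a + phi (b - a)" using add[of a "b - a"] that by auto
    then show ?thesis using pnn[of "b - a"] that False by auto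
  qed simp
  have p1: "phi 1 = 1" using single[of 1] H[of "{1}"] by simp
  have mult: "phi (real k / real n) = real k * phi (1 / real n)" if "1 \<le> k" "k \<le> n" for k n
    using that
  proof (induction k rule: dec_induct)
    case base then show ?case by simp
  next
    case (step k)
    have "real (Suc k) / real n = real k / n + 1 / n" by (simp add: add_divide_distrib)
    moreover have "phi (real k / n + 1 / n) = phi (real k / n) + phi (1 / n)"
      using step by (intro add) (auto simp: divide_simps)
    ultimately show ?case using step by (simp add: algebra_simps)
  qed
  have frac: "phi (real k / real n) = real k / real n" if "1 \<le> k" "k \<le> n" for k n
  proof -
    have "phi (1 / real n) * real n = 1" using mult[of n n] that p1 by (simp add: mult.commute)
    then have "phi (1 / real n) = 1 / real n" using that by (simp add: field_simps)
    then show ?thesis using mult[OF that] by simp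
  qed
  have close: "\<bar>phi t - t\<bar> \<le> 1 / real n" if "n \<ge> 1" for n
  proof (cases "t = 1")
    case True then show ?thesis using p1 by simp
  next
    case False
    then have tl: "t < 1" using t by auto
    define k where "k = nat \<lfloor>t * n\<rfloor>"
    have nk: "real k \<le> t * n" "t * n < real k + 1"
    proof -
      have "t * n \<ge> 0" using t by simp
      then have "real k = of_int \<lfloor>t * n\<rfloor>" unfolding k_def by simp
      then show "real k \<le> t * n" "t * n < real k + 1" by linarith+
    qed
    have kn: "k + 1 \<le> n"
    proof -
      have "t * n < n" using tl that by simp
      then show ?thesis using nk by linarith
    qed
    have np: "real n > 0" using that by simp
    have kn': "real (k + 1) \<le> real n" using kn by linarith
    have up: "phi t \<le> (real k + 1) / n"
    proof -
      have "t \<le> real (k + 1) / real n" using nk np by (simp add: field_simps)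
      moreover have "real (k + 1) / real n \<le> 1" using kn' np by simp
      ultimately have "phi t \<le> phi (real (k+1) / real n)" using mono[of t] t by blast
      also have "\<dots> = real (k + 1) / real n" using frac[of "k+1" n] kn by simp
      finally show ?thesis by (simp add: add.commute)
    qed
    have lo: "phi t \<ge> real k / n"
    proof (cases "k = 0")
      case True then show ?thesis using pnn t by simp
    next
      case False
      have "real k / real n \<le> t" using nk np by (simp add: field_simps)
      moreover have "real k / real n > 0" using False np by simp
      ultimately have "phi (real k / n) \<le> phi t" using mono t by blast
      moreover have "phi (real k / n) = real k / n" using frac[of k n] kn False by simp
      ultimately show ?thesis by simp
    qed
    have a: "t \<le> (real k + 1) / n" "real k / n \<le> t" using nk np by (simp_all add: field_simps)
    have b: "(real k + 1) / n = real k / n + 1 / n" by (simp add: add_divide_distrib)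
    show ?thesis using up lo a b by (simp only: abs_le_iff) linarith
  qed
  have "phi t = t"
  proof (rule ccontr)
    assume "phi t \<noteq> t"
    then have "\<bar>phi t - t\<bar> > 0" by simp
    from reals_Archimedean[OF this] obtain n where n: "inverse (real (Suc n)) < \<bar>phi t - t\<bar>" by blast
    moreover have "\<bar>phi t - t\<bar> \<le> inverse (real (Suc n))" using close[of "Suc n"] by (simp add: inverse_eq_divide)
    ultimately show False by linarith
  qed
  then show ?thesis using single t by simp
qed
lemma ens_of:
  assumes "finite S" "S \<subseteq> {0<..1}" "(\<Sum>x\<in>S. x) = 1" "a \<in> K"
  shows "(\<lambda>s. (s, a)) ` S \<in> finite_ensembles K"
    and "(\<Sum>x\<in>(\<lambda>s. (s, a)) ` S. f x) = (\<Sum>s\<in>S. f (s, a))"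
proof -
  have inj: "inj_on (\<lambda>s. (s, a)) S" by (auto simp: inj_on_def)
  show "(\<Sum>x\<in>(\<lambda>s. (s, a)) ` S. f x) = (\<Sum>s\<in>S. f (s, a))"
    using sum.reindex[OF inj] by simp
  have "(\<Sum>x\<in>(\<lambda>s. (s, a)) ` S. fst x) = 1" using sum.reindex[OF inj, of fst] assms by simp
  then show "(\<lambda>s. (s, a)) ` S \<in> finite_ensembles K"
    using assms unfolding finite_ensembles_def by auto
qed

theorem theorem1p11:
  fixes K :: "'a::real_vector set"
  assumes "convex K"
  shows "probability_weight (finite_ensembles K) f \<longleftrightarrow>
           (\<forall>x\<in>{0<..1} \<times> K. f x = fst x)"
proof
  assume pw: "probability_weight (finite_ensembles K) f"
  show "\<forall>x\<in>{0<..1} \<times> K. f x = fst x"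
  proof
    fix x :: "real \<times> 'a" assume x: "x \<in> {0<..1} \<times> K"
    obtain t a where xa: "x = (t, a)" "0 < t" "t \<le> 1" "a \<in> K" using x by auto
    have H: "(\<Sum>s\<in>S. f (s, a)) = 1" if "finite S" "S \<subseteq> {0<..1}" "(\<Sum>x\<in>S. x) = 1" for S
      using ens_of(1)[OF that xa(4)] ens_of(2)[OF that xa(4), of f] pw unfolding probability_weight_def by auto
    have nn: "f (s, a) \<ge> 0" if s: "0 < s" "s \<le> 1" for s
    proof -
      obtain S where S: "finite S" "S \<subseteq> {0<..1}" "(\<Sum>x\<in>S. x) = 1" "s \<in> S"
      proof (cases "s = 1")
        case True then show ?thesis using that[of "{1}"] by simp
      next
        case False
        obtain R where R: "finite R" "R \<subseteq> {0<..1}" "R \<inter> {s} = {}" "(\<Sum>x\<in>R. x) = 1 - s"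
          using avoid[of "{s}" "1 - s"] s False by auto
        show ?thesis using that[of "insert s R"] R s by auto
      qed
      have "(s, a) \<in> \<Union>(finite_ensembles K)" using ens_of(1)[OF S(1-3) xa(4)] S(4) by blast
      then show ?thesis using pw unfolding probability_weight_def by auto
    qed
    have "f (t, a) = t" by (rule core[of "\<lambda>s. f (s, a)", OF H nn xa(2,3)])
    then show "f x = fst x" unfolding xa(1) by simp
  qed
next
  assume r: "\<forall>x\<in>{0<..1} \<times> K. f x = fst x"
  show "probability_weight (finite_ensembles K) f"
    unfolding probability_weight_def
  proof (intro conjI ballI)
    fix x assume "x \<in> \<Union>(finite_ensembles K)"
    then have "x \<in> {0<..1} \<times> K" unfolding finite_ensembles_def by auto
    then show "f x \<in> {0..1}" using r by auto
  next
    fix E assume E: "E \<in> finite_ensembles K"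
    then have "E \<subseteq> {0<..1} \<times> K" unfolding finite_ensembles_def by auto
    then have "(\<Sum>x\<in>E. f x) = (\<Sum>x\<in>E. fst x)" using r by (intro sum.cong) auto
    then show "(\<Sum>x\<in>E. f x) = 1" using E unfolding finite_ensembles_def by auto
  qed
qed

end
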